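(* Let $B_J\in\mathbb R^{n\times n}$ satisfy $\|B_J\|_\infty<1$ (strict diagonal dominance by rows of $A=I-B_J$), and let $\mathcal B$ be any splitting of $B_J$. Then $\rho(T(\mathcal B))<1$, so the associated iterative scheme converges.
   Context: For $B\in\mathbb R^{n\times n}$, a splitting of $B$ of order $d\ge1$ is an ordered $d$-tuple $\mathcal B=(B_1,\dots,B_d)$ of real $n\times n$ matrices with $B_p\neq O$ for all $p$, $\sum_{p=1}^d B_p=B$, and $B_p\circ B_q=O$ (Hadamard product) for $p\ne q$. The iteration matrix of $\mathcal B$ is the $dn\times dn$ matrix $T(\mathcal B)=(I_{dn}-\mathcal L)^{-1}\mathcal U$, where $\mathcal L,\mathcal U$ are $d\times d$ block matrices with $n\times n$ blocks, $\mathcal L_{ij}=B_j$ if $i>j$ and $O$ otherwise, $\mathcal U_{ij}=B_j$ if $i\le j$ and $O$ otherwise. The associated scheme is $X^{(k+1)}=T(\mathcal B)X^{(k)}+\Gamma$. $\rho$ is spectral radius, $\|\cdot\|_\infty$ the maximum-row-sum norm. *)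

theory Defs
  imports "Jordan_Normal_Form.Spectral_Radius" "Jordan_Normal_Form.Gauss_Jordan_Elimination"
begin

definition inf_norm :: "real mat \<Rightarrow> real" where
  "inf_norm B = (MAX i \<in> {..<dim_row B}. \<Sum>j<dim_col B. \<bar>B $$ (i, j)\<bar>)"

definition hadamard :: "real mat \<Rightarrow> real mat \<Rightarrow> real mat" where
  "hadamard A C = mat (dim_row A) (dim_col A) (\<lambda>(i, j). A $$ (i, j) * C $$ (i, j))"

(* a splitting of B of order d = length Bs; Bs ! p is B_{p+1} *)
definition is_splitting :: "nat \<Rightarrow> real mat \<Rightarrow> real mat list \<Rightarrow> bool" where
  "is_splitting n B Bs \<longleftrightarrow>
     B \<in> carrier_mat n n \<and> length Bs \<ge> 1 \<and>
     (\<forall>p < length Bs. Bs ! p \<in> carrier_mat n n \<and> Bs ! p \<noteq> 0\<^sub>m n n) \<and>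
     foldr (+) Bs (0\<^sub>m n n) = B \<and>
     (\<forall>p < length Bs. \<forall>q < length Bs. p \<noteq> q \<longrightarrow> hadamard (Bs ! p) (Bs ! q) = 0\<^sub>m n n)"

(* block matrices: entry (i,j) of the dn x dn matrix lies in block (i div n, j div n) *)
definition blk_L :: "nat \<Rightarrow> real mat list \<Rightarrow> real mat" where
  "blk_L n Bs = mat (length Bs * n) (length Bs * n)
     (\<lambda>(i, j). if i div n > j div n then Bs ! (j div n) $$ (i mod n, j mod n) else 0)"

definition blk_U :: "nat \<Rightarrow> real mat list \<Rightarrow> real mat" where
  "blk_U n Bs = mat (length Bs * n) (length Bs * n)
     (\<lambda>(i, j). if i div n \<le> j div n then Bs ! (j div n) $$ (i mod n, j mod n) else 0)"

definition iter_mat :: "nat \<Rightarrow> real mat list \<Rightarrow> real mat" where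
  "iter_mat n Bs = the (mat_inverse (1\<^sub>m (length Bs * n) - blk_L n Bs)) * blk_U n Bs"

end

theory Submission
  imports Defs
begin

lemma sum_reindex_blocks:
  fixes f :: "nat \<Rightarrow> 'a::comm_monoid_add"
  shows "sum f {..<d*n} = (\<Sum>p<d. \<Sum>m<n. f (p*n+m))"
proof (induction d)
  case 0 then show ?case by simp
next
  case (Suc d)
  have "{..<Suc d * n} = {..<d*n} \<union> {d*n..<d*n+n}" by auto
  then have "sum f {..<Suc d * n} = sum f {..<d*n} + sum f {d*n..<d*n+n}"
    by (metis sum.union_disjoint finite_lessThan finite_atLeastLessThan disjoint_iff lessThan_iff atLeastLessThan_iff not_le)
  also have "sum f {d*n..<d*n+n} = (\<Sum>m<n. f (d*n+m))"
  proof -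
    have "{d*n..<d*n+n} = (\<lambda>m. d*n+m) ` {..<n}" 
      apply (auto simp: image_iff)
      subgoal for x by (rule bexI[of _ "x - d*n"]) auto
      done
    then show ?thesis by (simp add: sum.reindex)
  qed
  finally show ?case using Suc by simp
qed

lemma sum_abs_disjoint:
  fixes x :: "nat \<Rightarrow> real"
  assumes "\<And>p q. p < d \<Longrightarrow> q < d \<Longrightarrow> p \<noteq> q \<Longrightarrow> x p * x q = 0"
  shows "(\<Sum>p<d. \<bar>x p\<bar>) = \<bar>\<Sum>p<d. x p\<bar>"
proof (cases "\<forall>p<d. x p = 0")
  case True then show ?thesis by simp
next
  case False
  then obtain p0 where p0: "p0 < d" "x p0 \<noteq> 0" by auto
  have z: "\<And>q. q < d \<Longrightarrow> q \<noteq> p0 \<Longrightarrow> x q = 0" using assms[OF p0(1)] p0(2) by fastforce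
  have "(\<Sum>p<d. \<bar>x p\<bar>) = \<bar>x p0\<bar>" using p0 z by (subst sum.remove[of _ p0]) (auto intro!: sum.neutral)
  moreover have "(\<Sum>p<d. x p) = x p0" using p0 z by (subst sum.remove[of _ p0]) (auto intro!: sum.neutral)
  ultimately show ?thesis by simp
qed

lemma foldr_entry:
  assumes "\<forall>B\<in>set Bs. B \<in> carrier_mat n n"
  shows "foldr (+) Bs (0\<^sub>m n n) \<in> carrier_mat n n \<and>
    (\<forall>r<n. \<forall>m<n. foldr (+) Bs (0\<^sub>m n n) $$ (r,m) = (\<Sum>p<length Bs. Bs!p $$ (r,m)))"
  using assms
proof (induction Bs)
  case Nil then show ?case by simp
next
  case (Cons B Bs)
  then show ?case by (auto simp only: length_Cons sum.lessThan_Suc_shift) auto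
qed

lemma row_sum_bound:
  assumes BJc: "BJ \<in> carrier_mat n n" and spl: "is_splitting n BJ Bs"
    and r: "r < n"
  shows "(\<Sum>k<length Bs * n. \<bar>Bs ! (k div n) $$ (r, k mod n)\<bar>) \<le> inf_norm BJ"
proof -
  define d where "d = length Bs"
  from spl have Bc: "\<forall>p<d. Bs!p \<in> carrier_mat n n"
     and fold: "foldr (+) Bs (0\<^sub>m n n) = BJ"
     and had: "\<forall>p<d. \<forall>q<d. p\<noteq>q \<longrightarrow> hadamard (Bs!p) (Bs!q) = 0\<^sub>m n n"
    unfolding is_splitting_def d_def by auto
  have n0: "n > 0" using r by simp
  have "(\<Sum>k<d * n. \<bar>Bs ! (k div n) $$ (r, k mod n)\<bar>) = (\<Sum>p<d. \<Sum>m<n. \<bar>Bs ! ((p*n+m) div n) $$ (r, (p*n+m) mod n)\<bar>)"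
    by (rule sum_reindex_blocks)
  also have "\<dots> = (\<Sum>p<d. \<Sum>m<n. \<bar>Bs ! p $$ (r, m)\<bar>)"
    using n0 by (intro sum.cong refl) auto
  also have "\<dots> = (\<Sum>m<n. \<Sum>p<d. \<bar>Bs ! p $$ (r, m)\<bar>)" by (rule sum.swap)
  also have "\<dots> = (\<Sum>m<n. \<bar>\<Sum>p<d. Bs ! p $$ (r, m)\<bar>)"
  proof (intro sum.cong refl sum_abs_disjoint)
    fix m p q assume m: "m \<in> {..<n}" and pq: "p < d" "q < d" "p \<noteq> q"
    have "hadamard (Bs!p) (Bs!q) $$ (r,m) = 0" using had pq r m by auto
    then show "Bs ! p $$ (r, m) * Bs ! q $$ (r, m) = 0"
      using Bc pq r m unfolding hadamard_def by auto
  qed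
  also have "\<dots> = (\<Sum>m<n. \<bar>BJ $$ (r, m)\<bar>)"
  proof -
    have "\<forall>B\<in>set Bs. B \<in> carrier_mat n n" using Bc unfolding d_def by (auto simp: in_set_conv_nth)
    from foldr_entry[OF this] fold r show ?thesis unfolding d_def by (intro sum.cong refl) auto
  qed
  also have "\<dots> \<le> inf_norm BJ"
    unfolding inf_norm_def using BJc r by (intro Max_ge) auto
  finally show ?thesis unfolding d_def .
qed

theorem corollary4p1:
  fixes n :: nat and BJ :: "real mat" and Bs :: "real mat list"
  assumes "BJ \<in> carrier_mat n n"
    and "inf_norm BJ < 1"
    and "is_splitting n BJ Bs"
  shows "spectral_radius (map_mat complex_of_real (iter_mat n Bs)) < 1"
proof -
  define d where "d = length Bs"
  define N where "N = d*n"
  from assms(3) have d1: "d \<ge> 1" and Bc: "\<forall>p<d. Bs!p \<in> carrier_mat n n \<and> Bs!p \<noteq> 0\<^sub>m n n"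
    unfolding is_splitting_def d_def by auto
  have n0: "n > 0"
  proof (rule ccontr)
    assume "\<not> n > 0" hence n: "n = 0" by simp
    have "Bs!0 = 0\<^sub>m n n" using Bc d1 n by (intro eq_matI) auto
    with Bc d1 show False by auto
  qed
  have N0: "N > 0" using n0 d1 unfolding N_def by simp
  define L where "L = blk_L n Bs"
  define U where "U = blk_U n Bs"
  define W where "W = (\<lambda>i k. Bs!(k div n) $$ (i mod n, k mod n))"
  have Lc: "L \<in> carrier_mat N N" and Uc: "U \<in> carrier_mat N N"
    unfolding L_def U_def blk_L_def blk_U_def N_def d_def by auto
  have Le: "\<And>i k. i<N \<Longrightarrow> k<N \<Longrightarrow> L $$ (i,k) = (if i div n > k div n then W i k else 0)"
    unfolding L_def blk_L_def W_def N_def d_def by auto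
  have Ue: "\<And>i k. i<N \<Longrightarrow> k<N \<Longrightarrow> U $$ (i,k) = (if i div n \<le> k div n then W i k else 0)"
    unfolding U_def blk_U_def W_def N_def d_def by auto
  define A where "A = 1\<^sub>m N - L"
  have Ac: "A \<in> carrier_mat N N" unfolding A_def using Lc by auto
  have "det A = prod_list (diag_mat A)"
  proof (rule det_lower_triangular[OF _ Ac])
    fix i j assume "i < j" "j < N"
    moreover have "i div n \<le> j div n" using \<open>i < j\<close> by (simp add: div_le_mono)
    ultimately show "A $$ (i,j) = 0" unfolding A_def using Lc Le by auto
  qed
  also have "diag_mat A = map (\<lambda>i. 1) [0..<N]"
    unfolding diag_mat_def using Ac Lc Le by (auto simp: A_def)
  also have "prod_list (map (\<lambda>i. 1::real) [0..<N]) = 1" by (induct N) auto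
  finally have detA: "det A = 1" .
  obtain Ai where inv: "mat_inverse A = Some Ai"
  proof (cases "mat_inverse A")
    case None
    from mat_inverse(1)[OF Ac None, of "()"] det_non_zero_imp_unit[OF Ac, of "()"] detA
    show ?thesis by simp
  qed
  from mat_inverse(2)[OF Ac inv] have AAi: "A * Ai = 1\<^sub>m N" and Aic: "Ai \<in> carrier_mat N N" by auto
  have T: "iter_mat n Bs = Ai * U" unfolding iter_mat_def using inv by (simp add: A_def L_def U_def N_def d_def)
  define Tc where "Tc = map_mat complex_of_real (iter_mat n Bs)"
  have Tcc: "Tc \<in> carrier_mat N N" unfolding Tc_def T using Aic Uc by auto
  have ev: "norm lam < 1" if lam: "lam \<in> spectrum Tc" for lam
  proof (rule ccontr)
    assume "\<not> norm lam < 1" hence lam1: "norm lam \<ge> 1" by simp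
    hence lam0: "lam \<noteq> 0" by auto
    from lam obtain v where v: "v \<in> carrier_vec N" "v \<noteq> 0\<^sub>v N" "Tc *\<^sub>v v = lam \<cdot>\<^sub>v v"
      unfolding spectrum_def eigenvalue_def eigenvector_def using Tcc by auto
    let ?c = "map_mat complex_of_real"
    have h1: "?c (Ai * U) = ?c Ai * ?c U" by (rule of_real_hom.mat_hom_mult[OF Aic Uc])
    have h2: "?c (A * Ai) = ?c A * ?c Ai" by (rule of_real_hom.mat_hom_mult[OF Ac Aic])
    have "?c A * Tc = ?c A * (?c Ai * ?c U)" unfolding Tc_def T h1 ..
    also have "\<dots> = (?c A * ?c Ai) * ?c U" using Ac Aic Uc by (simp add: assoc_mult_mat[of _ N N _ N _ N])
    also have "?c A * ?c Ai = 1\<^sub>m N" using h2 AAi by (metis of_real_hom.mat_hom_one)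
    finally have cAT: "?c A * Tc = ?c U" using Uc by simp
    have "?c U *\<^sub>v v = ?c A *\<^sub>v (Tc *\<^sub>v v)" unfolding cAT[symmetric]
      using Ac Tcc v by (simp add: assoc_mult_mat_vec[of _ N N _ N])
    also have "\<dots> = lam \<cdot>\<^sub>v (?c A *\<^sub>v v)" unfolding v(3) using Ac v by (simp add: mult_mat_vec[of _ N N])
    finally have eq1: "?c U *\<^sub>v v = lam \<cdot>\<^sub>v (?c A *\<^sub>v v)" .
    have cA: "?c A = 1\<^sub>m N - ?c L" unfolding A_def using Lc by (intro eq_matI) auto
    have eq2: "?c A *\<^sub>v v = v - ?c L *\<^sub>v v" unfolding cA using Lc v
      by (simp add: minus_mult_distrib_mat_vec[of _ N N])
    have comp: "v $ i = (\<Sum>k\<in>{0..<N}. (of_real (U $$ (i,k)) / lam + of_real (L $$ (i,k))) * v $ k)"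
      if i: "i < N" for i
    proof -
      have "(?c U *\<^sub>v v) $ i = lam * (v $ i - (?c L *\<^sub>v v) $ i)"
        using arg_cong[OF eq1, of "\<lambda>w. w $ i"] eq2 i Lc Uc v by simp
      moreover have "(?c U *\<^sub>v v) $ i = (\<Sum>k\<in>{0..<N}. of_real (U $$ (i,k)) * v $ k)"
        using i Uc v by (simp add: scalar_prod_def)
      moreover have "(?c L *\<^sub>v v) $ i = (\<Sum>k\<in>{0..<N}. of_real (L $$ (i,k)) * v $ k)"
        using i Lc v by (simp add: scalar_prod_def)
      ultimately have "v $ i = (\<Sum>k\<in>{0..<N}. of_real (U $$ (i,k)) * v $ k) / lam + (\<Sum>k\<in>{0..<N}. of_real (L $$ (i,k)) * v $ k)"
        using lam0 by (simp add: field_simps)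
      also have "\<dots> = (\<Sum>k\<in>{0..<N}. (of_real (U $$ (i,k)) / lam + of_real (L $$ (i,k))) * v $ k)"
        by (simp add: sum_divide_distrib sum.distrib distrib_right)
      finally show ?thesis .
    qed
    have cb: "norm (of_real (U $$ (i,k)) / lam + of_real (L $$ (i,k)) :: complex) \<le> \<bar>W i k\<bar>"
      if "i < N" "k < N" for i k
    proof (cases "i div n > k div n")
      case True then show ?thesis using Le Ue that by simp
    next
      case False
      then have "norm (of_real (U $$ (i,k)) / lam + of_real (L $$ (i,k)) :: complex) = \<bar>W i k\<bar> / norm lam"
        using Le Ue that by (simp add: norm_divide)
      also have "\<dots> \<le> \<bar>W i k\<bar>" using lam1 by (simp add: divide_le_eq mult_le_cancel_left1 mult_left_le)
      finally show ?thesis .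
    qed
    define M where "M = Max ((\<lambda>i. norm (v $ i)) ` {0..<N})"
    have Mge: "norm (v $ i) \<le> M" if "i < N" for i unfolding M_def using that by (intro Max_ge) auto
    obtain i0 where i0: "i0 < N" "norm (v $ i0) = M"
      using Max_in[of "(\<lambda>i. norm (v $ i)) ` {0..<N}"] N0 unfolding M_def by fastforce
    obtain j where j: "j < N" "v $ j \<noteq> 0" using v(1,2) by (metis carrier_vecD eq_vecI index_zero_vec)
    have Mpos: "M > 0" using Mge[OF j(1)] j(2) using zero_less_norm_iff[of "v $ j"] by linarith
    have rs: "(\<Sum>k\<in>{0..<N}. \<bar>W i0 k\<bar>) \<le> inf_norm BJ"
      using row_sum_bound[OF assms(1) assms(3), of "i0 mod n"] n0
      unfolding W_def N_def d_def by (simp add: lessThan_atLeast0)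
    have "M = norm (v $ i0)" using i0 by simp
    also have "\<dots> \<le> (\<Sum>k\<in>{0..<N}. norm ((of_real (U $$ (i0,k)) / lam + of_real (L $$ (i0,k))) * v $ k))"
      unfolding comp[OF i0(1)] by (rule norm_sum)
    also have "\<dots> \<le> (\<Sum>k\<in>{0..<N}. \<bar>W i0 k\<bar> * M)"
      unfolding norm_mult by (intro sum_mono mult_mono cb Mge i0(1)) auto
    also have "\<dots> = M * (\<Sum>k\<in>{0..<N}. \<bar>W i0 k\<bar>)" by (simp add: sum_distrib_left mult.commute)
    also have "\<dots> \<le> M * inf_norm BJ" using rs Mpos by simp
    also have "\<dots> < M" using assms(2) Mpos by simp
    finally show False by simp
  qed
  have "spectral_radius Tc \<in> norm ` spectrum Tc" by (rule spectral_radius_mem_max(1)[OF Tcc N0])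
  with ev show ?thesis unfolding Tc_def by auto
qed

end
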